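(* Let $I\subseteq\mathbb{R}$ be an interval, let $f:I\to\mathbb{R}$ be differentiable on the interior $I^\circ$ of $I$, and let $a,b\in I$ with $a<b$ and $f'\in L^1[a,b]$. Let $s\in(0,1]$, $\alpha\in[0,1]$, $m\in(0,1]$, assume $b/m\in I^\circ$, and let $q>1$ and $p=\frac{q}{q-1}$. If $|f'|^q$ is $s$-$(\alpha,m)$-convex (in the first sense) on $[a,b]$, then $$\left|\frac{f(a)+f(b)}{2}-\frac{1}{b-a}\int_a^b f(x)\,dx\right|\le \frac{b-a}{2^{\frac{p+1}{p}}}\left[v_1|f'(a)|^q+v_2\left|f'\!\left(\frac{b}{m}\right)\right|^q\right]^{1/q},$$ where $v_1=\dfrac{1+2^{\alpha s}(\alpha s)}{2^{\alpha s}(\alpha s+1)(\alpha s+2)}$ and $v_2=m\left(\frac12-v_1\right)$.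
   Context: Let $s\in(0,1]$, $\alpha\in[0,1]$, $m\in(0,1]$. A nonnegative function $g$ is called $s$-$(\alpha,m)$-convex (in the first sense) on $[a,b]$ if for all $x,y\in[a,b]$ (with $y/m$ in the domain of $g$) and all $t\in[0,1]$, $$g(tx+(1-t)y)\le t^{\alpha s}g(x)+m\,(1-t^{\alpha s})\,g\!\left(\frac{y}{m}\right).$$ *)

theory Defs
  imports "HOL-Analysis.Analysis"
begin

text \<open>Real power t^e for t \<ge> 0 with the usual convention 0^0 = 1
  (Isabelle's powr has 0 powr 0 = 0).\<close>
definition rpow :: "real \<Rightarrow> real \<Rightarrow> real" where
  "rpow t e = (if t = 0 then (if e = 0 then 1 else 0) else t powr e)"

definition s_alpha_m_convex ::
  "real \<Rightarrow> real \<Rightarrow> real \<Rightarrow> real set \<Rightarrow> real set \<Rightarrow> (real \<Rightarrow> real) \<Rightarrow> bool" where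
  "s_alpha_m_convex s \<alpha> m S D g \<longleftrightarrow>
     (\<forall>x\<in>S. g x \<ge> 0) \<and>
     (\<forall>x\<in>S. \<forall>y\<in>S. \<forall>t\<in>{0..1}. y / m \<in> D \<longrightarrow>
        g (t * x + (1 - t) * y) \<le> rpow t (\<alpha> * s) * g x + m * (1 - rpow t (\<alpha> * s)) * g (y / m))"

end

theory Submission
  imports Defs
begin

lemma G_deriv:
  fixes a b k x :: real
  assumes ab: "a < b" and k: "0 \<le> k" and x: "x < b"
  defines "d \<equiv> b - a"
  shows "((\<lambda>x. d^2 * (((b-x)/d) powr (k+1) / (2*(k+1)) - ((b-x)/d) powr (k+2) / (k+2)))
     has_real_derivative (((a+b)/2 - x) * ((b-x)/d) powr k)) (at x)"
proof -
  have d: "d > 0" using ab d_def by simp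
  have u: "(b-x)/d > 0" using d x by simp
  have "((\<lambda>x. d^2 * (((b-x)/d) powr (k+1) / (2*(k+1)) - ((b-x)/d) powr (k+2) / (k+2)))
     has_real_derivative d^2 * ((k+1) * ((b-x)/d) powr (k+1-1) * ((0 - 1)/d) / (2*(k+1))
        - (k+2) * ((b-x)/d) powr (k+2-1) * ((0-1)/d) / (k+2))) (at x)"
    using u k by (auto intro!: derivative_eq_intros)
  moreover have "d^2 * ((k+1) * ((b-x)/d) powr (k+1-1) * ((0 - 1)/d) / (2*(k+1))
        - (k+2) * ((b-x)/d) powr (k+2-1) * ((0-1)/d) / (k+2)) = (((a+b)/2 - x) * ((b-x)/d) powr k)"
  proof -
    have e: "((b-x)/d) powr (k+2-1) = ((b-x)/d) * ((b-x)/d) powr k"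
      using u d x by (simp add: powr_add add.commute)
    have k1: "k+1 \<noteq> 0" "k+2 \<noteq> 0" using k by auto
    define P where "P = ((b-x)/d) powr k"
    define u where "u = (b-x)/d"
    have c1: "(k+1) * P * ((0 - 1)/d) / (2*(k+1)) = - P/(2*d)"
      using k1(1) by (metis diff_0 mult_minus1_right nonzero_mult_divide_mult_cancel_left2
    times_divide_eq_left times_divide_times_eq)
    have c2: "(k+2) * (u * P) * ((0 - 1)/d) / (k+2) = - u*P/d"
      using k1(2) by simp
    have c3: "d^2 * (- P/(2*d) - (- u*P/d)) = ((a+b)/2 - x) * P"
    proof -
      have "d^2 * (- P/(2*d) - (- u*P/d)) = ((b-x) - d/2) * P"
        using d unfolding u_def by (simp add: field_simps power2_eq_square)
      also have "(b-x) - d/2 = (a+b)/2 - x" unfolding d_def by (simp add: field_simps)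
      finally show ?thesis .
    qed
    have e1: "k+1-1 = k" by simp
    show ?thesis unfolding e unfolding e1 unfolding P_def[symmetric] unfolding u_def[symmetric] unfolding c1 c2 c3 by (rule refl)
  qed
  ultimately show ?thesis by simp
qed

definition Gf :: "real \<Rightarrow> real \<Rightarrow> real \<Rightarrow> real \<Rightarrow> real" where
  "Gf a b k x = (b-a)^2 * (((b-x)/(b-a)) powr (k+1) / (2*(k+1)) - ((b-x)/(b-a)) powr (k+2) / (k+2))"

lemma Gf_cont:
  assumes "a < b" "0 \<le> k"
  shows "continuous_on {a..b} (Gf a b k)"
proof -
  have "continuous_on {a..b} (\<lambda>x. ((b-x)/(b-a)) powr e)" if "e > 0" for e
    by (rule continuous_on_powr') (use that assms in \<open>auto intro!: continuous_intros\<close>)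
  from this[of "k+1"] this[of "k+2"] assms
  have c1: "continuous_on {a..b} (\<lambda>x. ((b-x)/(b-a)) powr (k+1))"
    and c2: "continuous_on {a..b} (\<lambda>x. ((b-x)/(b-a)) powr (k+2))" by auto
  have "continuous_on {a..b} (\<lambda>x. (b-a)^2 * (((b-x)/(b-a)) powr (k+1) / (2*(k+1)) - ((b-x)/(b-a)) powr (k+2) / (k+2)))"
    by (intro continuous_on_mult continuous_on_const continuous_on_diff continuous_on_divide c1 c2)
       (use assms in auto)
  then show ?thesis unfolding Gf_def .
qed

lemma J_int:
  fixes a b k :: real
  assumes ab: "a < b" and k: "0 \<le> k"
  shows "((\<lambda>x. \<bar>x - (a+b)/2\<bar> * rpow ((b-x)/(b-a)) k) has_integral
           (2 * Gf a b k ((a+b)/2) - Gf a b k a - Gf a b k b)) {a..b}"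
proof -
  define c where "c = (a+b)/2"
  have ac: "a \<le> c" "c \<le> b" using ab by (auto simp: c_def)
  have contG: "continuous_on {a..b} (Gf a b k)" by (rule Gf_cont[OF ab k])
  have der: "(Gf a b k has_real_derivative ((c - x) * ((b-x)/(b-a)) powr k)) (at x)" if "x < b" for x
    using G_deriv[OF ab k that] unfolding Gf_def c_def by (simp add: fun_eq_iff)
  have I1: "((\<lambda>x. \<bar>x - c\<bar> * rpow ((b-x)/(b-a)) k) has_integral (Gf a b k c - Gf a b k a)) {a..c}"
  proof (rule fundamental_theorem_of_calculus_interior[OF ac(1)])
    show "continuous_on {a..c} (Gf a b k)" using ac by (intro continuous_on_subset[OF contG]) auto
    fix x assume x: "x \<in> {a<..<c}"
    then have xb: "x < b" "x < c" using ac by auto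
    have "(b-x)/(b-a) \<noteq> 0" using xb ab by auto
    then have "\<bar>x - c\<bar> * rpow ((b-x)/(b-a)) k = (c - x) * ((b-x)/(b-a)) powr k"
      using xb by (simp add: rpow_def)
    then show "(Gf a b k has_vector_derivative \<bar>x - c\<bar> * rpow ((b-x)/(b-a)) k) (at x)"
      using der[OF xb(1)] by (simp add: has_real_derivative_iff_has_vector_derivative)
  qed
  have I2: "((\<lambda>x. \<bar>x - c\<bar> * rpow ((b-x)/(b-a)) k) has_integral ((\<lambda>x. - Gf a b k x) b - (\<lambda>x. - Gf a b k x) c)) {c..b}"
  proof (rule fundamental_theorem_of_calculus_interior[OF ac(2)])
    show "continuous_on {c..b} (\<lambda>x. - Gf a b k x)" using contG ac
      by (intro continuous_intros continuous_on_subset[OF contG]) auto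
    fix x assume x: "x \<in> {c<..<b}"
    then have xb: "x < b" "c < x" using ac by auto
    have "(b-x)/(b-a) \<noteq> 0" using xb ab by auto
    then have "\<bar>x - c\<bar> * rpow ((b-x)/(b-a)) k = - ((c - x) * ((b-x)/(b-a)) powr k)"
      using xb by (simp add: rpow_def algebra_simps)
    then show "((\<lambda>x. - Gf a b k x) has_vector_derivative \<bar>x - c\<bar> * rpow ((b-x)/(b-a)) k) (at x)"
      using DERIV_minus[OF der[OF xb(1)]] by (simp add: has_real_derivative_iff_has_vector_derivative)
  qed
  have "((\<lambda>x. \<bar>x - c\<bar> * rpow ((b-x)/(b-a)) k) has_integral
          ((Gf a b k c - Gf a b k a) + ((\<lambda>x. - Gf a b k x) b - (\<lambda>x. - Gf a b k x) c))) {a..b}"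
    by (rule has_integral_combine[OF ac I1 I2])
  then show ?thesis unfolding c_def[symmetric] by (simp add: algebra_simps)
qed

lemma J_val:
  fixes a b k :: real
  assumes ab: "a < b" and k: "0 \<le> k"
  shows "((\<lambda>x. \<bar>x - (a+b)/2\<bar> * rpow ((b-x)/(b-a)) k) has_integral
           ((b-a)^2/2 * ((1 + 2 powr k * k) / (2 powr k * (k+1) * (k+2))))) {a..b}"
proof -
  define T where "T = 2 powr k"
  define d where "d = b - a"
  have T: "T > 0" by (simp add: T_def)
  have d: "d > 0" using ab by (simp add: d_def)
  have h1: "(1/2::real) powr (k+1) = 1/(2*T)"
    by (simp add: T_def powr_add powr_divide)
  have h2: "(1/2::real) powr (k+2) = 1/(4*T)"
    by (simp add: T_def powr_add powr_divide)
  have uc: "(b - (a+b)/2)/(b-a) = 1/2" using ab by (simp add: field_simps)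
  have Gb: "Gf a b k b = 0" using k by (simp add: Gf_def)
  have Ga: "Gf a b k a = d^2 * (1/(2*(k+1)) - 1/(k+2))" using ab by (simp add: Gf_def d_def)
  have Gc: "Gf a b k ((a+b)/2) = d^2 * (1/(2*T) / (2*(k+1)) - 1/(4*T)/(k+2))"
    unfolding Gf_def uc h1 h2 d_def ..
  have "2 * Gf a b k ((a+b)/2) - Gf a b k a - Gf a b k b = d^2/2 * ((1 + T * k) / (T * (k+1) * (k+2)))"
  proof -
    have a: "k+1 \<noteq> 0" "k+2 \<noteq> 0" "T \<noteq> 0" using T k by auto
    show ?thesis unfolding Ga Gb Gc using a by (simp add: divide_simps) algebra
  qed
  with J_int[OF ab k] show ?thesis unfolding T_def d_def by simp
qed

lemma young_pt:
  fixes y l p q :: real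
  assumes y: "0 \<le> y" and l: "0 < l" and q: "1 < q" and p: "p = q / (q - 1)"
  shows "y \<le> l / p + y powr q / (q * l powr (q - 1))"
proof -
  have p1: "p > 1" unfolding p using q by (simp add: less_divide_eq)
  have pq: "1/p + 1/q = 1" unfolding p using q by (simp add: field_simps)
  define a where "a = l powr (1/p)"
  have a: "a > 0" using l by (simp add: a_def)
  define bb where "bb = y / a"
  have bb: "bb \<ge> 0" using a y by (simp add: bb_def)
  have "a * bb \<le> a powr p / p + bb powr q / q"
    by (rule Youngs_inequality[OF p1 q pq]) (use a bb in auto)
  moreover have "a * bb = y" using a by (simp add: bb_def)
  moreover have "a powr p = l" using l p1 by (simp add: a_def powr_powr)
  moreover have "bb powr q = y powr q / l powr (q - 1)"
  proof -
    have "bb powr q = y powr q / a powr q" using y a by (simp add: bb_def powr_divide)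
    moreover have "a powr q = l powr (q - 1)"
      using l p q by (simp add: a_def powr_powr)
    ultimately show ?thesis by simp
  qed
  ultimately show ?thesis by (simp add: field_simps)
qed

lemma final_arith:
  fixes d q p Q :: real
  assumes d: "d > 0" and q: "q > 1" and p: "p = q / (q - 1)" and Q: "Q > 0"
  shows "((2*Q) powr (1/q) / p * (d^2/4) + (d^2/2*Q) / (q * ((2*Q) powr (1/q)) powr (q - 1))) / d
          = d / 2 powr ((p + 1) / p) * Q powr (1/q)"
proof -
  define l where "l = (2*Q) powr (1/q)"
  have l: "l > 0" using Q by (simp add: l_def)
  have lq: "l powr q = 2*Q" using Q q by (simp add: l_def powr_powr)
  have lq1: "l powr q = l * l powr (q - 1)"
  proof -
    have "l powr q = l powr (1 + (q - 1))" by simp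
    also have "\<dots> = l powr 1 * l powr (q - 1)" by (rule powr_add)
    also have "\<dots> = l * l powr (q - 1)" using l by simp
    finally show ?thesis .
  qed
  have e1: "(d^2/2*Q) / (q * l powr (q - 1)) = d^2/4 * l / q"
  proof -
    have "l powr (q-1) > 0" using l by simp
    then show ?thesis using lq lq1 q l by (simp add: field_simps)
  qed
  have pq: "1/p + 1/q = 1" unfolding p using q by (simp add: field_simps)
  have "l / p * (d^2/4) + d^2/4 * l / q = d^2/4 * l * (1/p + 1/q)" by (simp add: field_simps)
  then have e2: "(l / p * (d^2/4) + (d^2/2*Q) / (q * l powr (q - 1))) / d = d/4 * l"
    using e1 pq d by (simp add: power2_eq_square)
  have e3: "(p + 1) / p = 2 - 1/q" unfolding p using q by (simp add: field_simps)
  have e4: "(2::real) powr (2 - 1/q) = 4 / 2 powr (1/q)" by (simp add: powr_diff)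
  have e5: "l = 2 powr (1/q) * Q powr (1/q)" using Q by (simp add: l_def powr_mult)
  show ?thesis unfolding l_def[symmetric] unfolding e2 unfolding e3 e4 e5 by simp
qed

theorem theorem3:
  fixes f :: "real \<Rightarrow> real" and I :: "real set"
    and a b s \<alpha> m q p :: real
  assumes I: "is_interval I"
    and diff: "\<forall>x\<in>interior I. f differentiable (at x)"
    and ab: "a \<in> I" "b \<in> I" "a < b"
    and cont: "continuous_on {a..b} f"
    and L1: "deriv f absolutely_integrable_on {a..b}"
    and s: "0 < s" "s \<le> 1"
    and \<alpha>: "0 \<le> \<alpha>" "\<alpha> \<le> 1"
    and m: "0 < m" "m \<le> 1"
    and bm: "b / m \<in> interior I"
    and q: "q > 1"
    and p: "p = q / (q - 1)"
    and conv: "s_alpha_m_convex s \<alpha> m {a..b} I (\<lambda>x. \<bar>deriv f x\<bar> powr q)"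
  shows "\<bar>(f a + f b) / 2 - (1 / (b - a)) * integral {a..b} f\<bar>
         \<le> (b - a) / 2 powr ((p + 1) / p) *
            ((1 + 2 powr (\<alpha> * s) * (\<alpha> * s)) / (2 powr (\<alpha> * s) * (\<alpha> * s + 1) * (\<alpha> * s + 2))
               * \<bar>deriv f a\<bar> powr q
             + m * (1 / 2 - (1 + 2 powr (\<alpha> * s) * (\<alpha> * s)) / (2 powr (\<alpha> * s) * (\<alpha> * s + 1) * (\<alpha> * s + 2)))
               * \<bar>deriv f (b / m)\<bar> powr q) powr (1 / q)"
proof -
  define c where "c = (a+b)/2"
  define d where "d = b - a"
  define k where "k = \<alpha> * s"
  define g where "g = deriv f"
  define A where "A = \<bar>g a\<bar> powr q"
  define B where "B = \<bar>g (b/m)\<bar> powr q"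
  define v1 where "v1 = (1 + 2 powr k * k) / (2 powr k * (k + 1) * (k + 2))"
  define Q where "Q = v1 * A + m * (1/2 - v1) * B"
  define R where "R = (\<lambda>x. rpow ((b-x)/(b-a)) k)"
  define h where "h = (\<lambda>x. R x * A + m * (1 - R x) * B)"
  have d: "d > 0" using ab by (simp add: d_def)
  have k: "0 \<le> k" using s \<alpha> by (simp add: k_def)
  have sub: "{a..b} \<subseteq> I"
  proof
    fix x assume "x \<in> {a..b}"
    then show "x \<in> I" using mem_is_interval_1_I[OF I ab(1) ab(2), of x] by simp
  qed
  have subi: "{a<..<b} \<subseteq> interior I"
    using interior_mono[OF sub] by simp
  have dergx: "(f has_real_derivative g x) (at x)" if "x \<in> {a<..<b}" for x
  proof -
    have "x \<in> interior I" using subi that by blast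
    then have "f differentiable (at x)" using diff by blast
    then show ?thesis unfolding g_def by (rule DERIV_deriv_iff_real_differentiable[THEN iffD2])
  qed
  have fint: "(f has_integral integral {a..b} f) {a..b}"
    using integrable_continuous_interval[OF cont] by (simp add: has_integral_integral)
  have H: "((\<lambda>x. f x + (x - c) * g x) has_integral ((b - c) * f b - (a - c) * f a)) {a..b}"
  proof -
    have "((\<lambda>x. f x + (x - c) * g x) has_integral ((\<lambda>x. (x - c) * f x) b - (\<lambda>x. (x - c) * f x) a)) {a..b}"
    proof (rule fundamental_theorem_of_calculus_interior)
      show "a \<le> b" using ab by simp
      show "continuous_on {a..b} (\<lambda>x. (x - c) * f x)" using cont by (intro continuous_intros)
      fix x assume x: "x \<in> {a<..<b}"
      have D1: "((\<lambda>x. x - c) has_real_derivative 1) (at x)" by (auto intro!: derivative_eq_intros)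
      have "((\<lambda>x. (x - c) * f x) has_real_derivative 1 * f x + g x * (x - c)) (at x)"
        by (rule DERIV_mult[OF D1 dergx[OF x]])
      then have "((\<lambda>x. (x - c) * f x) has_real_derivative f x + (x - c) * g x) (at x)"
        by (simp add: mult.commute)
      then show "((\<lambda>x. (x - c) * f x) has_vector_derivative f x + (x - c) * g x) (at x)"
        by (simp add: has_real_derivative_iff_has_vector_derivative)
    qed
    then show ?thesis by simp
  qed
  have IBP: "((\<lambda>x. (x - c) * g x) has_integral (d/2 * (f a + f b) - integral {a..b} f)) {a..b}"
  proof -
    have "((\<lambda>x. f x + (x - c) * g x - f x) has_integral ((b - c) * f b - (a - c) * f a - integral {a..b} f)) {a..b}"
      by (rule has_integral_diff[OF H fint])
    moreover have "(b - c) * f b - (a - c) * f a = d/2 * (f a + f b)"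
      by (simp add: c_def d_def field_simps)
    ultimately show ?thesis by simp
  qed
  define I0 where "I0 = d/2 * (f a + f b) - integral {a..b} f"
  have LHS: "\<bar>(f a + f b) / 2 - (1 / (b - a)) * integral {a..b} f\<bar> = \<bar>I0\<bar> / d"
  proof -
    have "(f a + f b) / 2 - (1 / (b - a)) * integral {a..b} f = I0 / d"
      using d unfolding I0_def d_def by (simp add: field_simps)
    then show ?thesis using d by simp
  qed
  have convb: "\<bar>g x\<bar> powr q \<le> h x" if x: "x \<in> {a..b}" for x
  proof -
    define t where "t = (b-x)/(b-a)"
    have t: "t \<in> {0..1}" using x ab by (auto simp: t_def field_simps)
    have tx: "t * a + (1 - t) * b = x"
    proof -
      have "t * a + (1 - t) * b = b - t * (b - a)" by (simp add: algebra_simps)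
      moreover have "t * (b - a) = b - x" using ab by (simp add: t_def)
      ultimately show ?thesis by simp
    qed
    have bmI: "b / m \<in> I" using bm interior_subset by blast
    have "(\<lambda>x. \<bar>deriv f x\<bar> powr q) (t * a + (1 - t) * b)
           \<le> rpow t (\<alpha> * s) * (\<lambda>x. \<bar>deriv f x\<bar> powr q) a
              + m * (1 - rpow t (\<alpha> * s)) * (\<lambda>x. \<bar>deriv f x\<bar> powr q) (b / m)"
    proof -
      have "\<forall>x\<in>{a..b}. \<forall>y\<in>{a..b}. \<forall>t\<in>{0..1}. y / m \<in> I \<longrightarrow>
        \<bar>deriv f (t * x + (1 - t) * y)\<bar> powr q \<le> rpow t (\<alpha> * s) * \<bar>deriv f x\<bar> powr q + m * (1 - rpow t (\<alpha> * s)) * \<bar>deriv f (y / m)\<bar> powr q"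
        using conv unfolding s_alpha_m_convex_def by (rule conjunct2)
      moreover have "a \<in> {a..b}" "b \<in> {a..b}" using ab by auto
      ultimately show ?thesis using t bmI by simp
    qed
    then have "\<bar>deriv f x\<bar> powr q \<le> rpow t (\<alpha> * s) * \<bar>deriv f a\<bar> powr q
              + m * (1 - rpow t (\<alpha> * s)) * \<bar>deriv f (b / m)\<bar> powr q" by (simp only: tx)
    then show ?thesis unfolding h_def R_def A_def B_def g_def k_def t_def .
  qed
  have HJ: "((\<lambda>x. \<bar>x - c\<bar> * R x) has_integral (d^2/2 * v1)) {a..b}"
    using J_val[OF ab(3) k] unfolding R_def c_def d_def v1_def .
  have HW: "((\<lambda>x. \<bar>x - c\<bar>) has_integral (d^2/4)) {a..b}"
  proof -
    have "((\<lambda>x. \<bar>x - c\<bar> * rpow ((b-x)/(b-a)) 0) has_integral (d^2/4)) {a..b}"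
      using J_val[OF ab(3), of 0] unfolding c_def d_def by simp
    moreover have "rpow t 0 = 1" for t by (simp add: rpow_def)
    ultimately show ?thesis by simp
  qed
  define V where "V = d^2/2 * Q"
  have HV: "((\<lambda>x. \<bar>x - c\<bar> * h x) has_integral V) {a..b}"
  proof -
    have "((\<lambda>x. (\<bar>x - c\<bar> * R x) * A + (m * B) * \<bar>x - c\<bar> - (m * B) * (\<bar>x - c\<bar> * R x))
          has_integral ((d^2/2 * v1) * A + (m * B) * (d^2/4) - (m * B) * (d^2/2 * v1))) {a..b}"
      by (intro has_integral_diff has_integral_add has_integral_mult_left has_integral_mult_right HJ HW)
    moreover have "(d^2/2 * v1) * A + (m * B) * (d^2/4) - (m * B) * (d^2/2 * v1) = V"
      unfolding V_def Q_def by (simp add: field_simps)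
    moreover have "(\<lambda>x. (\<bar>x - c\<bar> * R x) * A + (m * B) * \<bar>x - c\<bar> - (m * B) * (\<bar>x - c\<bar> * R x))
        = (\<lambda>x. \<bar>x - c\<bar> * h x)"
      unfolding h_def by (auto simp: fun_eq_iff algebra_simps)
    ultimately show ?thesis by simp
  qed
  have V0: "V \<ge> 0"
  proof (rule has_integral_nonneg[OF HV])
    fix x assume "x \<in> {a..b}"
    then have "\<bar>g x\<bar> powr q \<le> h x" by (rule convb)
    moreover have "0 \<le> \<bar>g x\<bar> powr q" by simp
    ultimately have "0 \<le> h x" by linarith
    then show "0 \<le> \<bar>x - c\<bar> * h x" by simp
  qed
  have Q0: "Q \<ge> 0" using V0 d unfolding V_def by (simp add: zero_le_mult_iff)
  have est: "\<bar>I0\<bar> \<le> l / p * (d^2/4) + V / (q * l powr (q - 1))" if l: "l > 0" for l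
  proof -
    have Fint: "((\<lambda>x. l / p * \<bar>x - c\<bar> + \<bar>x - c\<bar> * h x / (q * l powr (q - 1)))
       has_integral (l / p * (d^2/4) + V / (q * l powr (q - 1)))) {a..b}"
      by (intro has_integral_add has_integral_mult_right has_integral_divide HW HV)
    have "norm (integral {a..b} (\<lambda>x. (x - c) * g x))
          \<le> integral {a..b} (\<lambda>x. l / p * \<bar>x - c\<bar> + \<bar>x - c\<bar> * h x / (q * l powr (q - 1)))"
    proof (rule integral_norm_bound_integral)
      show "(\<lambda>x. (x - c) * g x) integrable_on {a..b}" using IBP by blast
      show "(\<lambda>x. l / p * \<bar>x - c\<bar> + \<bar>x - c\<bar> * h x / (q * l powr (q - 1))) integrable_on {a..b}"
        using Fint by blast
      fix x assume x: "x \<in> {a..b}"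
      have y: "\<bar>g x\<bar> \<le> l / p + \<bar>g x\<bar> powr q / (q * l powr (q - 1))"
        by (rule young_pt[OF _ l q p]) simp
      also have "\<dots> \<le> l / p + h x / (q * l powr (q - 1))"
        using convb[OF x] q l by (intro add_left_mono divide_right_mono) auto
      finally have that: "\<bar>x - c\<bar> * \<bar>g x\<bar> \<le> \<bar>x - c\<bar> * (l / p + h x / (q * l powr (q - 1)))"
        by (intro mult_left_mono) auto
      show "norm ((x - c) * g x) \<le> l / p * \<bar>x - c\<bar> + \<bar>x - c\<bar> * h x / (q * l powr (q - 1))"
      proof -
        have e1: "norm ((x - c) * g x) = \<bar>x - c\<bar> * \<bar>g x\<bar>" by (simp add: abs_mult)
        have e2: "\<bar>x - c\<bar> * (l / p + h x / (q * l powr (q - 1)))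
            = l / p * \<bar>x - c\<bar> + \<bar>x - c\<bar> * h x / (q * l powr (q - 1))"
          by (simp add: distrib_left)
        show ?thesis using that unfolding e1 e2 .
      qed
    qed
    moreover have "integral {a..b} (\<lambda>x. (x - c) * g x) = I0" using IBP unfolding I0_def by blast
    moreover have "integral {a..b} (\<lambda>x. l / p * \<bar>x - c\<bar> + \<bar>x - c\<bar> * h x / (q * l powr (q - 1)))
        = l / p * (d^2/4) + V / (q * l powr (q - 1))" using Fint by blast
    ultimately show ?thesis by simp
  qed
  have goal: "\<bar>I0\<bar> / d \<le> d / 2 powr ((p + 1) / p) * Q powr (1/q)"
  proof (cases "Q = 0")
    case True
    have p0: "p > 0" unfolding p using q by simp
    have "\<bar>I0\<bar> \<le> 0"
    proof (rule field_le_epsilon)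
      fix e :: real assume e: "e > 0"
      define l where "l = e * p * 4 / d^2"
      have l: "l > 0" using e p0 d by (simp add: l_def)
      have "\<bar>I0\<bar> \<le> l / p * (d^2/4) + V / (q * l powr (q - 1))" by (rule est[OF l])
      also have "\<dots> = e" using True p0 d unfolding V_def l_def by (simp add: field_simps)
      finally show "\<bar>I0\<bar> \<le> 0 + e" by simp
    qed
    then show ?thesis using True q by simp
  next
    case False
    then have Qp: "Q > 0" using Q0 by simp
    have "\<bar>I0\<bar> / d \<le> ((2*Q) powr (1/q) / p * (d^2/4) + (d^2/2*Q) / (q * ((2*Q) powr (1/q)) powr (q - 1))) / d"
      using est[of "(2*Q) powr (1/q)"] Qp d unfolding V_def by (intro divide_right_mono) auto
    also have "\<dots> = d / 2 powr ((p + 1) / p) * Q powr (1/q)"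
      by (rule final_arith[OF d q p Qp])
    finally show ?thesis .
  qed
  show ?thesis unfolding LHS using goal
    unfolding d_def Q_def v1_def k_def A_def B_def g_def .
qed

end
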